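(* Let $f=\sum_{n\ge0}\sum_{i=0}^{2^n-1}\frac{1}{(n+1)^2}\sigma_{n,i}$ on $[0,1]$, and let $F$ be a non-constant function holomorphic on a connected open neighbourhood of $[0,\frac{\pi^2}{6}]$ in $\mathbb{C}$ and real-valued on $[0,\frac{\pi^2}{6}]$. Then $F\circ f$ has no finite one-sided derivative at any point of $[0,1]$.
   Context: The Faber–Schauder functions: $\sigma_{0,0}(x)=0$ for $x\le 0$ or $x\ge 1$, $\sigma_{0,0}(x)=2x$ for $0\le x\le \frac12$, $\sigma_{0,0}(x)=2-2x$ for $\frac12\le x\le 1$; and for $n\ge 0$, $0\le i\le 2^n-1$, $\sigma_{n,i}(x)=\sigma_{0,0}(2^nx-i)$. *)

theory Defs
  imports "HOL-Analysis.Analysis"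
begin

definition sigma00 :: "real \<Rightarrow> real" where
  "sigma00 x = (if x \<le> 0 \<or> x \<ge> 1 then 0
                else if x \<le> 1/2 then 2 * x else 2 - 2 * x)"

definition sigma :: "nat \<Rightarrow> nat \<Rightarrow> real \<Rightarrow> real" where
  "sigma n i x = sigma00 (2 ^ n * x - real i)"

definition schauder_f :: "real \<Rightarrow> real" where
  "schauder_f x = (\<Sum>n. \<Sum>i<2 ^ n. sigma n i x / (real n + 1) ^ 2)"

end

theory Submission
  imports Defs "HOL-Complex_Analysis.Complex_Analysis" "HOL-Real_Asymp.Real_Asymp"
begin


lemma sigma00_alt: "sigma00 x = max 0 (min (2*x) (2-2*x))"
  unfolding sigma00_def by auto

lemma sigma00_ge0: "0 \<le> sigma00 x" and sigma00_le1: "sigma00 x \<le> 1"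
  unfolding sigma00_alt by auto

lemma sigma00_cont: "continuous_on A sigma00"
  unfolding sigma00_alt[abs_def] by (intro continuous_intros)

lemma sigma00_int: "sigma00 (real_of_int k) = 0"
proof -
  have "k \<le> 0 \<or> k \<ge> 1" by linarith
  then show ?thesis unfolding sigma00_def by auto
qed

lemma sigma00_zero: assumes "i \<noteq> nat \<lfloor>s\<rfloor>" shows "sigma00 (s - real i) = 0"
proof (rule ccontr)
  assume "sigma00 (s - real i) \<noteq> 0"
  then have "real i < s" "s < real i + 1" unfolding sigma00_def by (auto split: if_splits)
  then have "\<lfloor>s\<rfloor> = int i" by (simp add: floor_eq_iff)
  then show False using assms by simp
qed

lemma sigma_sum_bounds: "0 \<le> (\<Sum>i<N. sigma00 (s - real i))" "(\<Sum>i<N. sigma00 (s - real i)) \<le> 1"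
proof -
  have "(\<Sum>i<N. sigma00 (s - real i)) = (\<Sum>i<N. if i = nat \<lfloor>s\<rfloor> then sigma00 (s - real (nat \<lfloor>s\<rfloor>)) else 0)"
    by (rule sum.cong) (auto simp: sigma00_zero)
  also have "\<dots> = (if nat \<lfloor>s\<rfloor> < N then sigma00 (s - real (nat \<lfloor>s\<rfloor>)) else 0)"
    by (simp add: sum.delta)
  finally have e: "(\<Sum>i<N. sigma00 (s - real i)) = \<dots>" .
  show "0 \<le> (\<Sum>i<N. sigma00 (s - real i))" "(\<Sum>i<N. sigma00 (s - real i)) \<le> 1"
    unfolding e using sigma00_ge0 sigma00_le1 by auto
qed

definition L :: "nat \<Rightarrow> real \<Rightarrow> real" where
  "L n t = (\<Sum>i<2 ^ n. sigma n i t / (real n + 1) ^ 2)"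

lemma L_alt: "L n t = (\<Sum>i<2 ^ n. sigma00 (2^n*t - real i)) / (real n + 1) ^ 2"
  unfolding L_def sigma_def by (simp add: sum_divide_distrib)

lemma L_bounds: "0 \<le> L n t" "L n t \<le> 1 / (real n + 1)^2"
  unfolding L_alt using sigma_sum_bounds[where N="2^n" and s="2^n*t"]
  by (auto intro: divide_right_mono)

lemma f_eq: "schauder_f t = (\<Sum>n. L n t)"
  unfolding schauder_f_def L_def ..

lemma summable_M: "summable (\<lambda>n. 1 / (real n + 1)^2)"
proof -
  have "(\<lambda>n. 1 / real ((n + 1)\<^sup>2)) = (\<lambda>n. 1 / (real n + 1)^2)" by (simp add: add.commute)
  then show ?thesis using inverse_squares_sums sums_summable by metis
qed

lemma sums_M: "(\<lambda>n. 1 / (real n + 1)^2) sums (pi^2/6)"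
proof -
  have "(\<lambda>n. 1 / real ((n + 1)\<^sup>2)) = (\<lambda>n. 1 / (real n + 1)^2)" by (simp add: add.commute)
  then show ?thesis using inverse_squares_sums by metis
qed

lemma summable_L: "summable (\<lambda>n. L n t)"
  by (rule summable_comparison_test'[OF summable_M, of 0]) (use L_bounds in auto)

lemma f_range: "0 \<le> schauder_f t" "schauder_f t \<le> pi^2/6"
proof -
  show "0 \<le> schauder_f t" unfolding f_eq by (rule suminf_nonneg[OF summable_L]) (simp add: L_bounds)
  have "(\<Sum>n. L n t) \<le> (\<Sum>n. 1 / (real n + 1)^2)"
    by (rule suminf_le[OF _ summable_L summable_M]) (simp add: L_bounds)
  then show "schauder_f t \<le> pi^2/6" unfolding f_eq using sums_M sums_unique by metis
qed

lemma L_cont: "continuous_on A (L n)"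
  unfolding L_alt[abs_def]
  by (intro continuous_intros continuous_on_compose2[OF sigma00_cont]) auto

lemma f_cont: "continuous_on A schauder_f"
proof -
  have u: "uniform_limit A (\<lambda>n x. \<Sum>i<n. L i x) (\<lambda>x. \<Sum>i. L i x) sequentially"
    by (rule Weierstrass_m_test[OF _ summable_M]) (use L_bounds in auto)
  have "continuous_on A (\<lambda>x. \<Sum>i. L i x)"
    by (rule uniform_limit_theorem[OF _ u]) (intro always_eventually allI continuous_on_sum L_cont, simp)
  then show ?thesis unfolding f_eq[abs_def] .
qed



lemma sigma00_lin:
  fixes p :: int
  assumes "p/2 \<le> u" "u \<le> (p+1)/2" "p/2 \<le> v" "v \<le> (p+1)/2"
  shows "sigma00 ((u+v)/2) = (sigma00 u + sigma00 v)/2"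
proof -
  consider "p \<le> -1" | "p = 0" | "p = 1" | "p \<ge> 2" by linarith
  then show ?thesis
  proof cases
    case 1
    then have "real_of_int p \<le> -1" by simp
    then show ?thesis using assms unfolding sigma00_def by auto
  next
    case 2
    have h: "sigma00 t = 2*t" if "0 \<le> t" "t \<le> 1/2" for t
      using that unfolding sigma00_def by auto
    show ?thesis using assms 2 by (subst (1 2 3) h) auto
  next
    case 3
    have h: "sigma00 t = 2 - 2*t" if "1/2 \<le> t" "t \<le> 1" for t
      using that unfolding sigma00_def by auto
    show ?thesis using assms 3 by (subst (1 2 3) h) (auto simp: field_simps)
  next
    case 4
    then have "real_of_int p \<ge> 2" by simp
    then show ?thesis using assms unfolding sigma00_def by auto
  qed
qed

lemma sigma00_half: "sigma00 (real_of_int k + 1/2) = (if k = 0 then 1 else 0)"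
proof -
  have "k \<le> -1 \<or> k = 0 \<or> k \<ge> 1" by linarith
  then show ?thesis unfolding sigma00_def by auto
qed

lemma term_i:
  fixes j m n i :: nat
  assumes "j < 2^m"
  shows "sigma00 (2^n*((2*real j+1)/2^(m+1)) - i) -
     (sigma00 (2^n*(real j/2^m) - i) + sigma00 (2^n*((real j+1)/2^m) - i))/2
     = (if n = m \<and> i = j then 1 else 0)"
proof -
  consider "n < m" | "n = m" | "n > m" by linarith
  then show ?thesis
  proof cases
    case 1
    then obtain d where m: "m = n + Suc d" using less_iff_Suc_add by auto
    define e :: nat where "e = 2^d"
    have epos: "e > 0" unfolding e_def by simp
    define q r where "q = j div e" and "r = j mod e"
    have j: "j = q*e + r" unfolding q_def r_def by simp
    have re: "r + 1 \<le> e" unfolding r_def using epos by (simp add: Suc_leI)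
    have pm: "(2::real)^m = 2^n * (2 * real e)" unfolding m e_def by (simp add: power_add)
    have pm1: "(2::real)^(m+1) = 2^n * (4 * real e)" unfolding m e_def by (simp add: power_add)
    define p :: int where "p = int q - 2 * int i"
    define u where "u = real_of_int p / 2 + real r / (2*e)"
    define v where "v = real_of_int p / 2 + (real r + 1) / (2*e)"
    have ea: "2^n*(real j/2^m) - i = u"
      unfolding u_def p_def pm j using epos by (simp add: field_simps)
    have ec: "2^n*((real j+1)/2^m) - i = v"
      unfolding v_def p_def pm j using epos by (simp add: field_simps)
    have eb: "2^n*((2*real j+1)/2^(m+1)) - i = (u+v)/2"
      unfolding u_def v_def p_def pm1 j using epos by (simp add: field_simps)
    have r1: "(real r + 1) / (2*e) \<le> 1/2" using re epos by (simp add: field_simps)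
    have r0: "real r / (2*e) \<le> 1/2" using re epos by (simp add: field_simps)
    have "sigma00 ((u+v)/2) = (sigma00 u + sigma00 v)/2"
      by (rule sigma00_lin[of p]) (use r1 r0 in \<open>auto simp: u_def v_def\<close>)
    then show ?thesis unfolding ea eb ec using 1 by simp
  next
    case 2
    have ea: "2^n*(real j/2^m) - real i = real_of_int (int j - int i)" using 2 by simp
    have ec: "2^n*((real j+1)/2^m) - real i = real_of_int (int j + 1 - int i)" using 2 by simp
    have eb: "2^n*((2*real j+1)/2^(m+1)) - real i = real_of_int (int j - int i) + 1/2"
      using 2 by (simp add: field_simps)
    show ?thesis unfolding ea eb ec sigma00_int sigma00_half using 2 by auto
  next
    case 3
    then obtain d where n: "n = m + Suc d" using less_iff_Suc_add by auto
    have ea: "2^n*(real j/2^m) - real i = real_of_int (int j * 2 * 2^d - int i)"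
      unfolding n by (simp add: power_add)
    have ec: "2^n*((real j+1)/2^m) - real i = real_of_int ((int j + 1) * 2 * 2^d - int i)"
      unfolding n by (simp add: power_add)
    have eb: "2^n*((2*real j+1)/2^(m+1)) - real i = real_of_int ((2*int j + 1) * 2^d - int i)"
      unfolding n by (simp add: power_add)
    show ?thesis unfolding ea eb ec sigma00_int using 3 by auto
  qed
qed

lemma aux_sum: "(\<Sum>i\<in>A. f i)/k - ((\<Sum>i\<in>A. g i)/k + (\<Sum>i\<in>A. h i)/k)/2
   = (\<Sum>i\<in>A. f i - (g i + h i)/2) / (k::real)"
  by (simp add: sum_subtractf sum.distrib sum_divide_distrib[symmetric] add_divide_distrib diff_divide_distrib)

lemma L_diff:
  fixes j m n :: nat
  assumes "j < 2^m"
  shows "L n ((2*real j+1)/2^(m+1)) - (L n (real j/2^m) + L n ((real j+1)/2^m))/2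
     = (if n = m then 1 / (real m + 1)^2 else 0)"
proof -
  have "L n ((2*real j+1)/2^(m+1)) - (L n (real j/2^m) + L n ((real j+1)/2^m))/2
    = (\<Sum>i<2^n. sigma00 (2^n*((2*real j+1)/2^(m+1)) - i) -
     (sigma00 (2^n*(real j/2^m) - real i) + sigma00 (2^n*((real j+1)/2^m) - real i))/2) / (real n + 1)^2"
    unfolding L_alt by (simp only: aux_sum)
  also have "\<dots> = (\<Sum>i<2^n. (if n = m \<and> i = j then 1 else 0)) / (real n + 1)^2"
    by (simp only: term_i[OF assms])
  also have "\<dots> = (if n = m then 1 / (real m + 1)^2 else 0)"
    using assms by (auto simp: sum.delta)
  finally show ?thesis .
qed

lemma f_diff:
  fixes j m :: nat
  assumes "j < 2^m"
  shows "schauder_f ((2*real j+1)/2^(m+1)) - (schauder_f (real j/2^m) + schauder_f ((real j+1)/2^m))/2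
     = 1 / (real m + 1)^2"
proof -
  let ?b = "(2*real j+1)/2^(m+1)" and ?a = "real j/2^m" and ?c = "(real j+1)/2^m"
  have "(\<lambda>n. L n ?b - (L n ?a + L n ?c)/2) sums (schauder_f ?b - (schauder_f ?a + schauder_f ?c)/2)"
    unfolding f_eq
    by (intro sums_diff sums_divide sums_add summable_sums summable_L)
  moreover have "(\<lambda>n. L n ?b - (L n ?a + L n ?c)/2) sums (1 / (real m + 1)^2)"
    unfolding L_diff[OF assms] using sums_single[of m "\<lambda>_. 1 / (real m + 1)^2"] by simp
  ultimately show ?thesis using sums_unique2 by blast
qed



lemma aux3: fixes fa fb fc fx t :: real
  assumes "fb - (fa+fc)/2 = 2*t" "\<bar>fa - fx\<bar> < t" "\<bar>fb - fx\<bar> < t" "\<bar>fc - fx\<bar> < t"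
  shows False using assms by (auto simp: abs_less_iff field_simps)

lemma three:
  fixes j m :: nat assumes "j < 2^m"
  shows "\<exists>y\<in>{real j/2^m, (2*real j+1)/2^(m+1), (real j+1)/2^m}.
           1/(2*(real m+1)^2) \<le> \<bar>schauder_f y - schauder_f x\<bar>"
proof (rule ccontr)
  assume "\<not> ?thesis"
  then have h: "\<bar>schauder_f y - schauder_f x\<bar> < 1/(2*(real m+1)^2)"
    if "y \<in> {real j/2^m, (2*real j+1)/2^(m+1), (real j+1)/2^m}" for y
    using that by auto
  have e: "1 / (real m + 1)^2 = 2 * (1/(2*(real m+1)^2))" by simp
  have h1: "\<bar>schauder_f (real j/2^m) - schauder_f x\<bar> < 1/(2*(real m+1)^2)" by (rule h) simp
  have h2: "\<bar>schauder_f ((2*real j+1)/2^(m+1)) - schauder_f x\<bar> < 1/(2*(real m+1)^2)" by (rule h) simp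
  have h3: "\<bar>schauder_f ((real j+1)/2^m) - schauder_f x\<bar> < 1/(2*(real m+1)^2)" by (rule h) simp
  show False
    using aux3[OF f_diff[OF assms, unfolded e] h1 h2 h3] .
qed

lemma right_points:
  assumes "0 \<le> x" "x < 1"
  shows "eventually (\<lambda>m. \<exists>y\<in>{x..1}. y \<noteq> x \<and> \<bar>y - x\<bar> \<le> 2/2^m \<and>
            1/(2*(real m+1)^2) \<le> \<bar>schauder_f y - schauder_f x\<bar>) sequentially"
proof -
  obtain N where N: "2/(1-x) < 2^N" using real_arch_pow[of "2::real"] by auto
  show ?thesis unfolding eventually_sequentially
  proof (intro exI allI impI)
    fix m assume "N \<le> m"
    define P :: real where "P = 2^m"
    have Ppos: "P > 0" unfolding P_def by simp
    have "2/(1-x) < P" using N \<open>N \<le> m\<close> unfolding P_def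
      by (meson less_le_trans one_le_numeral power_increasing)
    then have xP: "x*P + 2 \<le> P" using assms by (simp add: field_simps)
    define k where "k = \<lfloor>x*P\<rfloor>"
    have k0: "k \<ge> 0" unfolding k_def using assms Ppos by simp
    define j where "j = nat k + 1"
    have rj: "real j = real_of_int k + 1" unfolding j_def using k0 by simp
    have j1: "x*P < real j" "real j \<le> x*P + 1" unfolding rj k_def by linarith+
    have jlt: "j < 2^m"
    proof -
      have "real j < P" using j1 xP by linarith
      then have "real j < real (2^m::nat)" unfolding P_def by simp
      then show ?thesis by linarith
    qed
    have P1: "(2::real)^(m+1) = 2*P" unfolding P_def by simp
    obtain y where y: "y \<in> {real j/2^m, (2*real j+1)/2^(m+1), (real j+1)/2^m}"
      "1/(2*(real m+1)^2) \<le> \<bar>schauder_f y - schauder_f x\<bar>"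
      using three[OF jlt, of x] by blast
    have a1: "x < real j/P" using j1 Ppos by (simp add: field_simps)
    have c1: "(real j+1)/P \<le> x + 2/P"
    proof -
      have "(real j+1)/P \<le> (x*P+2)/P" by (rule divide_right_mono) (use j1 Ppos in auto)
      also have "(x*P+2)/P = x + 2/P" using Ppos by (simp add: field_simps)
      finally show ?thesis .
    qed
    have b1: "real j/P \<le> (2*real j+1)/(2*P)" "(2*real j+1)/(2*P) \<le> (real j+1)/P"
      using Ppos by (simp_all add: field_simps)
    have yb: "x < y \<and> y \<le> x + 2/P"
      using y(1) a1 b1 c1 unfolding P1 P_def[symmetric] by auto
    have "x + 2/P \<le> 1"
    proof -
      have "x + 2/P = (x*P+2)/P" using Ppos by (simp add: field_simps)
      also have "\<dots> \<le> P/P" by (rule divide_right_mono) (use xP Ppos in auto)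
      finally show ?thesis using Ppos by simp
    qed
    then have "y \<le> 1" using yb by linarith
    show "\<exists>y\<in>{x..1}. y \<noteq> x \<and> \<bar>y - x\<bar> \<le> 2/2^m \<and>
            1/(2*(real m+1)^2) \<le> \<bar>schauder_f y - schauder_f x\<bar>"
      using yb y(2) \<open>y \<le> 1\<close> unfolding P_def by (intro bexI[of _ y]) auto
  qed
qed

lemma left_points:
  assumes "0 < x" "x \<le> 1"
  shows "eventually (\<lambda>m. \<exists>y\<in>{0..x}. y \<noteq> x \<and> \<bar>y - x\<bar> \<le> 2/2^m \<and>
            1/(2*(real m+1)^2) \<le> \<bar>schauder_f y - schauder_f x\<bar>) sequentially"
proof -
  obtain N where N: "2/x < 2^N" using real_arch_pow[of "2::real"] by auto
  show ?thesis unfolding eventually_sequentially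
  proof (intro exI allI impI)
    fix m assume "N \<le> m"
    define P :: real where "P = 2^m"
    have Ppos: "P > 0" unfolding P_def by simp
    have "2/x < P" using N \<open>N \<le> m\<close> unfolding P_def
      by (meson less_le_trans one_le_numeral power_increasing)
    then have xP: "2 \<le> x*P" using assms by (simp add: field_simps)
    have xP1: "x*P \<le> P" using assms Ppos by simp
    define k where "k = \<lceil>x*P\<rceil>"
    have k2: "k \<ge> 2" unfolding k_def using xP by linarith
    define j where "j = nat (k - 2)"
    have rj: "real j = real_of_int k - 2" unfolding j_def using k2 by simp
    have j1: "x*P - 2 \<le> real j" "real j < x*P - 1" unfolding rj k_def by linarith+
    have jlt: "j < 2^m"
    proof -
      have "real j < P" using j1 xP1 by linarith
      then have "real j < real (2^m::nat)" unfolding P_def by simp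
      then show ?thesis by linarith
    qed
    have P1: "(2::real)^(m+1) = 2*P" unfolding P_def by simp
    obtain y where y: "y \<in> {real j/2^m, (2*real j+1)/2^(m+1), (real j+1)/2^m}"
      "1/(2*(real m+1)^2) \<le> \<bar>schauder_f y - schauder_f x\<bar>"
      using three[OF jlt, of x] by blast
    have a1: "x - 2/P \<le> real j/P"
    proof -
      have "x - 2/P = (x*P-2)/P" using Ppos by (simp add: field_simps)
      also have "\<dots> \<le> real j/P" by (rule divide_right_mono) (use j1 Ppos in auto)
      finally show ?thesis .
    qed
    have c1: "(real j+1)/P < x" using j1 Ppos by (simp add: field_simps)
    have b1: "real j/P \<le> (2*real j+1)/(2*P)" "(2*real j+1)/(2*P) \<le> (real j+1)/P"
      using Ppos by (simp_all add: field_simps)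
    have a0: "0 \<le> real j/P" using Ppos by simp
    have yb: "y < x \<and> x - 2/P \<le> y \<and> 0 \<le> y"
      using y(1) a1 b1 c1 a0 unfolding P1 P_def[symmetric] by auto
    show "\<exists>y\<in>{0..x}. y \<noteq> x \<and> \<bar>y - x\<bar> \<le> 2/2^m \<and>
            1/(2*(real m+1)^2) \<le> \<bar>schauder_f y - schauder_f x\<bar>"
      using yb y(2) unfolding P_def by (intro bexI[of _ y]) auto
  qed
qed



lemma growth: "eventually (\<lambda>m. C < 2^m / (2*(real m+1)^2)^n) sequentially"
proof -
  have "filterlim (\<lambda>m::nat. 2^m / (2*(real m+1)^2)^n) at_top at_top" by real_asymp
  then have "eventually (\<lambda>m. C + 1 \<le> 2^m / (2*(real m+1)^2)^n) sequentially"
    unfolding filterlim_at_top by blast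
  then show ?thesis by eventually_elim simp
qed

lemma small: assumes "e > 0" shows "eventually (\<lambda>m::nat. 2/2^m < (e::real)) sequentially"
proof -
  have "(\<lambda>m::nat. 2/2^m :: real) \<longlonglongrightarrow> 0" by real_asymp
  from order_tendstoD(2)[OF this assms] show ?thesis .
qed

lemma no_deriv:
  fixes F :: "complex \<Rightarrow> complex" and U :: "complex set"
  assumes "open U" and "connected U"
    and "complex_of_real ` {0 .. pi\<^sup>2 / 6} \<subseteq> U"
    and "F holomorphic_on U"
    and "\<forall>t \<in> {0 .. pi\<^sup>2 / 6}. F (complex_of_real t) \<in> \<real>"
    and "\<not> (\<exists>c. \<forall>z \<in> U. F z = c)"
    and x: "x \<in> {0..1}" and S: "S \<subseteq> {0..1}"
    and ev: "eventually (\<lambda>m. \<exists>y\<in>S. y \<noteq> x \<and> \<bar>y - x\<bar> \<le> 2/2^m \<and>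
            1/(2*(real m+1)^2) \<le> \<bar>schauder_f y - schauder_f x\<bar>) sequentially"
  shows "\<not> (\<exists>D. ((\<lambda>y. Re (F (complex_of_real (schauder_f y)))) has_real_derivative D) (at x within S))"
proof
  assume "\<exists>D. ((\<lambda>y. Re (F (complex_of_real (schauder_f y)))) has_real_derivative D) (at x within S)"
  then obtain D where D: "((\<lambda>y. Re (F (complex_of_real (schauder_f y)))) has_real_derivative D) (at x within S)"
    by blast
  define G where "G = (\<lambda>y. Re (F (complex_of_real (schauder_f y))))"
  define z0 where "z0 = complex_of_real (schauder_f x)"
  have rng: "\<And>t. schauder_f t \<in> {0..pi^2/6}" using f_range by auto
  have z0U: "z0 \<in> U" using assms(3) rng unfolding z0_def by blast
  have nc: "\<not> (\<lambda>w. F w - F z0) constant_on U"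
  proof
    assume "(\<lambda>w. F w - F z0) constant_on U"
    then obtain c where "\<forall>w\<in>U. F w - F z0 = c" unfolding constant_on_def by blast
    then have "\<forall>w\<in>U. F w = c + F z0" by (metis diff_add_cancel add.commute)
    then show False using assms(6) by blast
  qed
  have hol: "(\<lambda>w. F w - F z0) holomorphic_on U" using assms(4) by (intro holomorphic_intros)
  obtain g r n where n: "0<n" "0<r" "ball z0 r \<subseteq> U" "g holomorphic_on ball z0 r"
    "\<And>w. w\<in>ball z0 r \<Longrightarrow> F w - F z0 = (w - z0)^n * g w" "\<And>w. w\<in>ball z0 r \<Longrightarrow> g w \<noteq> 0"
    by (rule holomorphic_factor_zero_nonconstant[OF hol assms(1,2) z0U _ nc]) auto
  define \<delta> where "\<delta> = cmod (g z0) / 2"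
  have gz0: "g z0 \<noteq> 0" using n(2,6) by simp
  have \<delta>pos: "\<delta> > 0" unfolding \<delta>_def using gz0 by simp
  have "continuous_on (ball z0 r) g" using n(4) holomorphic_on_imp_continuous_on by blast
  then have "isCont g z0" using n(2) by (simp add: continuous_on_eq_continuous_at)
  then obtain r1 where r1: "r1 > 0" "\<And>w. dist w z0 < r1 \<Longrightarrow> dist (g w) (g z0) < \<delta>"
    unfolding continuous_at_eps_delta using \<delta>pos by blast
  define \<rho> where "\<rho> = min r r1"
  have \<rho>pos: "\<rho> > 0" unfolding \<rho>_def using n(2) r1(1) by simp
  have gbound: "cmod (F w - F z0) \<ge> cmod (w - z0)^n * \<delta>" if "dist w z0 < \<rho>" for w
  proof -
    have wb: "w \<in> ball z0 r" using that unfolding \<rho>_def by (simp add: dist_commute)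
    have "dist (g w) (g z0) < \<delta>" using r1(2) that unfolding \<rho>_def by simp
    then have "cmod (g w) \<ge> \<delta>" unfolding \<delta>_def dist_norm
      using norm_triangle_ineq2[of "g z0" "g w"] by (simp add: norm_minus_commute)
    then have "cmod (w - z0)^n * \<delta> \<le> cmod (w - z0)^n * cmod (g w)"
      by (intro mult_left_mono) auto
    also have "\<dots> = cmod (F w - F z0)" using n(5)[OF wb] by (simp add: norm_mult norm_power)
    finally show ?thesis .
  qed
  have "\<exists>d>0. \<forall>y\<in>{0..1}. dist y x < d \<longrightarrow> dist (schauder_f y) (schauder_f x) < \<rho>"
    using f_cont[of "{0..1}"] x \<rho>pos unfolding continuous_on_iff by blast
  then obtain d1 where d1: "d1 > 0" "\<And>y. y \<in> {0..1} \<Longrightarrow> dist y x < d1 \<Longrightarrow> dist (schauder_f y) (schauder_f x) < \<rho>"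
    by blast
  have "((\<lambda>y. (G y - G x) / (y - x)) \<longlongrightarrow> D) (at x within S)"
    using D unfolding G_def has_field_derivative_iff .
  from tendstoD[OF this, of 1]
  obtain d2 where d2: "d2 > 0" "\<And>y. y \<in> S \<Longrightarrow> y \<noteq> x \<Longrightarrow> dist y x < d2 \<Longrightarrow> dist ((G y - G x) / (y - x)) D < 1"
    unfolding eventually_at by auto
  define C where "C = 2 * (\<bar>D\<bar> + 1) / \<delta>"
  define Q where "Q = (\<lambda>m. (\<exists>y\<in>S. y \<noteq> x \<and> \<bar>y - x\<bar> \<le> 2/2^m \<and>
            1/(2*(real m+1)^2) \<le> \<bar>schauder_f y - schauder_f x\<bar>) \<and>
         C < 2^m / (2*(real m+1)^2)^n \<and> 2/2^m < min d1 d2)"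
  have "eventually Q sequentially"
    unfolding Q_def using ev growth[of C n] small[of "min d1 d2"] d1(1) d2(1)
    by (intro eventually_conj) auto
  then obtain m where "Q m" using eventually_sequentially by (meson order_refl)
  then have m: "\<exists>y\<in>S. y \<noteq> x \<and> \<bar>y - x\<bar> \<le> 2/2^m \<and>
            1/(2*(real m+1)^2) \<le> \<bar>schauder_f y - schauder_f x\<bar>"
       "C < 2^m / (2*(real m+1)^2)^n" "2/2^m < min d1 d2"
    unfolding Q_def by blast+
  then obtain y where y: "y \<in> S" "y \<noteq> x" "\<bar>y - x\<bar> \<le> 2/2^m"
    "1/(2*(real m+1)^2) \<le> \<bar>schauder_f y - schauder_f x\<bar>" by blast
  define lb where "lb = 1/(2*(real m+1)^2)"
  have lbpos: "lb > 0" unfolding lb_def by simp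
  have yd: "dist y x < d1" "dist y x < d2" using y(3) m(3) unfolding dist_real_def by auto
  define w where "w = complex_of_real (schauder_f y)"
  have wz: "dist w z0 < \<rho>" using d1(2)[OF _ yd(1)] y(1) S unfolding w_def z0_def
    by (auto simp: dist_complex_def dist_real_def simp flip: of_real_diff)
  have "F w \<in> \<real>" "F z0 \<in> \<real>" using assms(5) rng unfolding w_def z0_def by auto
  then have "F w - F z0 \<in> \<real>" by (rule Reals_diff)
  then obtain t where t: "F w - F z0 = complex_of_real t" by (rule Reals_cases)
  have Gd: "\<bar>G y - G x\<bar> = cmod (F w - F z0)"
  proof -
    have "G y - G x = Re (F w - F z0)" unfolding G_def w_def z0_def by simp
    then show ?thesis using t by simp
  qed
  have cw: "cmod (w - z0) = \<bar>schauder_f y - schauder_f x\<bar>"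
    unfolding w_def z0_def by (simp flip: of_real_diff)
  have "lb^n * \<delta> \<le> cmod (w - z0)^n * \<delta>"
    using y(4) lbpos \<delta>pos unfolding cw lb_def[symmetric]
    by (intro mult_right_mono power_mono) auto
  also have "\<dots> \<le> \<bar>G y - G x\<bar>" using gbound[OF wz] Gd by simp
  finally have low: "lb^n * \<delta> \<le> \<bar>G y - G x\<bar>" .
  have yx: "\<bar>y - x\<bar> > 0" using y(2) by simp
  have "\<bar>(G y - G x) / (y - x)\<bar> < \<bar>D\<bar> + 1" using d2(2)[OF y(1,2) yd(2)]
    unfolding dist_real_def by linarith
  then have "\<bar>G y - G x\<bar> < (\<bar>D\<bar> + 1) * \<bar>y - x\<bar>" using yx
    by (simp add: abs_divide pos_divide_less_eq)
  also have "\<dots> \<le> (\<bar>D\<bar> + 1) * (2/2^m)" using y(3) by (intro mult_left_mono) auto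
  finally have up: "\<bar>G y - G x\<bar> < (\<bar>D\<bar> + 1) * (2/2^m)" .
  have "lb^n = 1 / (2*(real m+1)^2)^n" unfolding lb_def by (simp add: power_one_over)
  have Q: "(2*(real m+1)^2)^n > 0" by simp
  have "C * (2*(real m+1)^2)^n < 2^m" using m(2) Q by (simp add: pos_less_divide_eq)
  then have "2 * (\<bar>D\<bar> + 1) * (2*(real m+1)^2)^n < 2^m * \<delta>"
    unfolding C_def using \<delta>pos by (simp add: field_simps)
  then have "(\<bar>D\<bar> + 1) * (2/2^m) < \<delta> / (2*(real m+1)^2)^n"
    using Q by (simp add: field_simps)
  also have "\<dots> = lb^n * \<delta>" unfolding lb_def by (simp add: power_one_over)
  finally show False using low up by linarith
qed


theorem mainTheorem7:
  fixes F :: "complex \<Rightarrow> complex" and U :: "complex set"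
  assumes "open U" and "connected U"
    and "complex_of_real ` {0 .. pi\<^sup>2 / 6} \<subseteq> U"
    and "F holomorphic_on U"
    and "\<forall>t \<in> {0 .. pi\<^sup>2 / 6}. F (complex_of_real t) \<in> \<real>"
    and "\<not> (\<exists>c. \<forall>z \<in> U. F z = c)"
  shows "\<forall>x \<in> {0..1::real}.
           (x < 1 \<longrightarrow> \<not> (\<exists>D. ((\<lambda>y. Re (F (complex_of_real (schauder_f y))))
                                 has_real_derivative D) (at x within {x..1}))) \<and>
           (0 < x \<longrightarrow> \<not> (\<exists>D. ((\<lambda>y. Re (F (complex_of_real (schauder_f y))))
                                 has_real_derivative D) (at x within {0..x})))"
  proof (intro ballI conjI impI)
  fix x :: real assume x: "x \<in> {0..1}"
  { assume "x < 1"
    then have e: "eventually (\<lambda>m. \<exists>y\<in>{x..1}. y \<noteq> x \<and> \<bar>y - x\<bar> \<le> 2/2^m \<and>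
            1/(2*(real m+1)^2) \<le> \<bar>schauder_f y - schauder_f x\<bar>) sequentially"
      using x by (intro right_points) auto
    show "\<not> (\<exists>D. ((\<lambda>y. Re (F (complex_of_real (schauder_f y)))) has_real_derivative D) (at x within {x..1}))"
      by (rule no_deriv[OF assms x _ e]) (use x in auto) }
  { assume "0 < x"
    then have e: "eventually (\<lambda>m. \<exists>y\<in>{0..x}. y \<noteq> x \<and> \<bar>y - x\<bar> \<le> 2/2^m \<and>
            1/(2*(real m+1)^2) \<le> \<bar>schauder_f y - schauder_f x\<bar>) sequentially"
      using x by (intro left_points) auto
    show "\<not> (\<exists>D. ((\<lambda>y. Re (F (complex_of_real (schauder_f y)))) has_real_derivative D) (at x within {0..x}))"
      by (rule no_deriv[OF assms x _ e]) (use x in auto) }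
qed

end
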